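(* Let $\rho>0$ and assume $\Gamma(0)<\Gamma(1)$ and $1+\rho\ln\mu(0)>0$. Then for every $\rho$-admissible scaling $n\mapsto L_n$, \[ \lim_{n\to\infty}\mathbb{E}[I^{(0)}_n(L_n)]=\begin{cases}\infty&\text{if } 1+\rho\ln\Gamma(0)<0,\\ 0&\text{if } 1+\rho\ln\Gamma(0)>0.\end{cases} \]
   Context: Homogeneous binary MAG model. Fix $\mu(0),\mu(1)\in(0,1)$ with $\mu(0)+\mu(1)=1$, and a symmetric $2\times2$ matrix $(q(a,b))$ with $q(0,1)=q(1,0)$ and $0<q(a,b)<1$. On a probability space, $\{A,A_\ell(u):\ell,u\ge1\}$ are i.i.d. $\{0,1\}$-valued with $\mathbb{P}[A=1]=\mu(1)$, independent of i.i.d. uniform$(0,1)$ variables $\{U(u,v):1\le u<v\}$, $U(v,u)=U(u,v)$. With $\mathbf A_L(u)=(A_1(u),\dots,A_L(u))$ and $Q_L(\mathbf a,\mathbf b)=\prod_{\ell=1}^Lq(a_\ell,b_\ell)$, the graph $\mathbb{M}(n;L)$ on $\{1,\dots,n\}$ has an edge between distinct $u,v$ iff $U(u,v)\le Q_L(\mathbf A_L(u),\mathbf A_L(v))$. Let $S_L(u)=A_1(u)+\dots+A_L(u)$. For $\ell\in\{0,\dots,L\}$, $I^{(\ell)}_n(L)$ denotes the number of nodes $u\in\{1,\dots,n\}$ that are isolated in $\mathbb{M}(n;L)$ and satisfy $S_L(u)=\ell$. $\Gamma(a)=\mathbb{E}[q(a,A)]$. A scaling $n\mapsto L_n$ of positive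 integers is $\rho$-admissible if $L_n\sim\rho\ln n$. *)

theory Defs
  imports "HOL-Probability.Probability" "HOL-Library.Landau_Symbols"
begin

text \<open>Binary attribute values are encoded as bool: True = 1, False = 0.
  mu b = mu(b), q a b = q(a,b).\<close>

definition Aidx :: "nat \<Rightarrow> nat \<Rightarrow> (nat \<times> nat) set" where
  "Aidx n L = {1..n} \<times> {1..L}"   (* (u, l) indexes A_l(u) *)

definition Uidx :: "nat \<Rightarrow> (nat \<times> nat) set" where
  "Uidx n = {(u, v). 1 \<le> u \<and> u < v \<and> v \<le> n}"

text \<open>Joint law of the finitely many variables A_l(u), U(u,v) that determine M(n;L):
  i.i.d. Bernoulli(mu(1)) attributes, independent of i.i.d. uniform(0,1) variables.\<close>
definition MAG_space :: "(bool \<Rightarrow> real) \<Rightarrow> nat \<Rightarrow> nat \<Rightarrow> ((nat \<times> nat \<Rightarrow> bool) \<times> (nat \<times> nat \<Rightarrow> real)) measure" where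
  "MAG_space mu n L =
     (PiM (Aidx n L) (\<lambda>_. measure_pmf (bernoulli_pmf (mu True))))
     \<Otimes>\<^sub>M (PiM (Uidx n) (\<lambda>_. uniform_measure lborel {0<..<1::real}))"

definition QL :: "(bool \<Rightarrow> bool \<Rightarrow> real) \<Rightarrow> nat \<Rightarrow> (nat \<times> nat \<Rightarrow> bool) \<Rightarrow> nat \<Rightarrow> nat \<Rightarrow> real" where
  "QL q L a u v = (\<Prod>l\<in>{1..L}. q (a (u, l)) (a (v, l)))"

definition MAG_edge :: "(bool \<Rightarrow> bool \<Rightarrow> real) \<Rightarrow> nat \<Rightarrow>
     (nat \<times> nat \<Rightarrow> bool) \<times> (nat \<times> nat \<Rightarrow> real) \<Rightarrow> nat \<Rightarrow> nat \<Rightarrow> bool" where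
  "MAG_edge q L \<omega> u v \<longleftrightarrow>
     u \<noteq> v \<and> snd \<omega> (min u v, max u v) \<le> QL q L (fst \<omega>) u v"

definition S_L :: "nat \<Rightarrow> (nat \<times> nat \<Rightarrow> bool) \<Rightarrow> nat \<Rightarrow> nat" where
  "S_L L a u = card {l \<in> {1..L}. a (u, l)}"

definition I_count :: "(bool \<Rightarrow> bool \<Rightarrow> real) \<Rightarrow> nat \<Rightarrow> nat \<Rightarrow> nat \<Rightarrow>
     (nat \<times> nat \<Rightarrow> bool) \<times> (nat \<times> nat \<Rightarrow> real) \<Rightarrow> nat" where
  "I_count q l n L \<omega> =
     card {u \<in> {1..n}. (\<forall>v\<in>{1..n}. \<not> MAG_edge q L \<omega> u v) \<and> S_L L (fst \<omega>) u = l}"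

definition expected_I :: "(bool \<Rightarrow> real) \<Rightarrow> (bool \<Rightarrow> bool \<Rightarrow> real) \<Rightarrow> nat \<Rightarrow> nat \<Rightarrow> nat \<Rightarrow> real" where
  "expected_I mu q l n L = integral\<^sup>L (MAG_space mu n L) (\<lambda>\<omega>. real (I_count q l n L \<omega>))"

definition Gamma_MAG :: "(bool \<Rightarrow> real) \<Rightarrow> (bool \<Rightarrow> bool \<Rightarrow> real) \<Rightarrow> bool \<Rightarrow> real" where
  "Gamma_MAG mu q a = mu False * q a False + mu True * q a True"   (* E[q(a,A)] *)

definition admissible :: "real \<Rightarrow> (nat \<Rightarrow> nat) \<Rightarrow> bool" where
  "admissible \<rho> L \<longleftrightarrow> (\<forall>n. 0 < L n) \<and>
     (\<lambda>n. real (L n)) \<sim>[at_top] (\<lambda>n. \<rho> * ln (real n))"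

end

theory Submission
  imports Defs "HOL-Real_Asymp.Real_Asymp"
begin


lemma comp_meas_pmf:
  "(\<lambda>x. x i) \<in> measurable (PiM I (\<lambda>_. measure_pmf p)) (count_space UNIV)"
proof (cases "i \<in> I")
  case True
  have "(\<lambda>x. x i) \<in> measurable (PiM I (\<lambda>_. measure_pmf p)) (measure_pmf p)"
    using True by (rule measurable_component_singleton)
  moreover have "measurable (PiM I (\<lambda>_. measure_pmf p)) (measure_pmf p) = measurable (PiM I (\<lambda>_. measure_pmf p)) (count_space UNIV)"
    by (rule measurable_cong_sets) auto
  ultimately show ?thesis by simp
next
  case False
  show ?thesis
    by (rule measurable_cong[where g="\<lambda>x. undefined", THEN iffD2])
       (use False in \<open>auto simp: space_PiM PiE_def extensional_def\<close>)
qed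

lemma comp_meas_unif:
  "(\<lambda>x. x i) \<in> borel_measurable (PiM I (\<lambda>_. uniform_measure lborel S))"
proof (cases "i \<in> I")
  case True
  have "(\<lambda>x. x i) \<in> measurable (PiM I (\<lambda>_. uniform_measure lborel S)) (uniform_measure lborel S)"
    using True by (rule measurable_component_singleton)
  moreover have "measurable (PiM I (\<lambda>_. uniform_measure lborel S)) (uniform_measure lborel S) = borel_measurable (PiM I (\<lambda>_. uniform_measure lborel S))"
    by (rule measurable_cong_sets) auto
  ultimately show ?thesis by simp
next
  case False
  show ?thesis
    by (rule measurable_cong[where g="\<lambda>x. undefined", THEN iffD2])
       (use False in \<open>auto simp: space_PiM PiE_def extensional_def\<close>)
qed

lemma prod_integral_sub:
  fixes h :: "'i \<Rightarrow> 'a \<Rightarrow> real"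
  assumes M: "prob_space M" and fin: "finite I" and J: "J \<subseteq> I"
    and int: "\<And>i. i \<in> J \<Longrightarrow> integrable M (h i)"
  shows "(\<integral>\<omega>. (\<Prod>i\<in>J. h i (\<omega> i)) \<partial>PiM I (\<lambda>_. M)) = (\<Prod>i\<in>J. integral\<^sup>L M (h i))"
proof -
  interpret product_prob_space "\<lambda>_. M"
    using M by (intro product_prob_spaceI) auto
  define f where "f i = (if i \<in> J then h i else (\<lambda>_. 1))" for i
  have "(\<integral>\<omega>. (\<Prod>i\<in>I. f i (\<omega> i)) \<partial>PiM I (\<lambda>_. M)) = (\<Prod>i\<in>I. integral\<^sup>L M (f i))"
    by (rule product_integral_prod) (use fin int in \<open>auto simp: f_def\<close>)
  also have "\<dots> = (\<Prod>i\<in>J. integral\<^sup>L M (h i))"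
  proof -
    have "(\<Prod>i\<in>I. integral\<^sup>L M (f i)) = (\<Prod>i\<in>I. if i \<in> J then integral\<^sup>L M (h i) else 1)"
      by (intro prod.cong) (auto simp: f_def prob_space.prob_space[OF M])
    also have "\<dots> = (\<Prod>i\<in>I \<inter> J. integral\<^sup>L M (h i))"
      by (rule prod.inter_restrict[symmetric]) (rule fin)
    finally show ?thesis using J by (simp add: Int_absorb1)
  qed
  also have "(\<lambda>\<omega>. \<Prod>i\<in>I. f i (\<omega> i)) = (\<lambda>\<omega>. \<Prod>i\<in>J. h i (\<omega> i))"
  proof
    fix \<omega>
    have "(\<Prod>i\<in>I. f i (\<omega> i)) = (\<Prod>i\<in>I. if i \<in> J then h i (\<omega> i) else 1)"
      by (intro prod.cong) (auto simp: f_def)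
    also have "\<dots> = (\<Prod>i\<in>I \<inter> J. h i (\<omega> i))"
      by (rule prod.inter_restrict[symmetric]) (rule fin)
    finally show "(\<Prod>i\<in>I. f i (\<omega> i)) = (\<Prod>i\<in>J. h i (\<omega> i))" using J by (simp add: Int_absorb1)
  qed
  finally show ?thesis .
qed



lemma coord_indep:
  assumes M: "\<And>i. i \<in> I \<Longrightarrow> prob_space (M i)"
  shows "prob_space.indep_vars (PiM I M) M (\<lambda>i x. x i) I"
proof -
  interpret P: prob_space "PiM I M" by (rule prob_space_PiM) (use M in auto)
  show ?thesis
  proof (cases "I = {}")
    case True
    show ?thesis unfolding P.indep_vars_def P.indep_sets_def using True by simp
  next
    case False
    show ?thesis
    proof (subst P.indep_vars_iff_distr_eq_PiM'[OF False])
      show "(\<lambda>x. x i) \<in> measurable (PiM I M) (M i)" if "i \<in> I" for i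
        using that by (rule measurable_component_singleton)
      have "distr (PiM I M) (PiM I M) (\<lambda>x. restrict (\<lambda>i. x i) I) = distr (PiM I M) (PiM I M) (\<lambda>x. x)"
        by (rule distr_cong) (auto simp: space_PiM)
      also have "\<dots> = PiM I M" by (rule distr_id)
      also have "\<dots> = PiM I (\<lambda>i. distr (PiM I M) (M i) (\<lambda>x. x i))"
        by (rule PiM_cong) (auto simp: distr_PiM_component M)
      finally show "distr (PiM I M) (PiM I M) (\<lambda>x. restrict (\<lambda>i. x i) I) = PiM I (\<lambda>i. distr (PiM I M) (M i) (\<lambda>x. x i))" .
    qed
  qed
qed



lemma prod_pair_singleton:
  "(\<Prod>l\<in>S. f (u, l)) = (\<Prod>i\<in>{u} \<times> S. f i)"
proof -
  have "{u} \<times> S = Pair u ` S" by auto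
  then show ?thesis by (simp add: prod.reindex inj_on_def)
qed

lemma A_block:
  fixes p :: real and g :: "bool \<Rightarrow> real"
  assumes p0: "0 \<le> p" and p1: "p \<le> 1" and u: "u \<in> {1..n}"
    and g0: "\<And>x. 0 \<le> g x" and g1: "\<And>x. g x \<le> 1"
  shows "(\<integral>a. (\<Prod>v\<in>{1..n}. (if v = u then (\<Prod>l\<in>{1..L}. (if a (v,l) then 0 else 1))
            else 1 - (\<Prod>l\<in>{1..L}. g (a (v,l))))) \<partial>PiM (Aidx n L) (\<lambda>_. measure_pmf (bernoulli_pmf p)))
         = (1-p)^L * (1 - (g True * p + g False * (1-p))^L)^(n-1)"
proof -
  let ?B = "measure_pmf (bernoulli_pmf p)"
  let ?M = "PiM (Aidx n L) (\<lambda>_. ?B)"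
  interpret P: prob_space ?M by (rule prob_space_PiM) (rule measure_pmf.prob_space_axioms)
  define Y where "Y v a = (if v = u then (\<Prod>l\<in>{1..L}. (if a (v,l) then 0 else 1::real))
            else 1 - (\<Prod>l\<in>{1..L}. g (a (v,l))))" for v and a :: "nat \<times> nat \<Rightarrow> bool"
  define K where "K v = {v} \<times> {1..L}" for v :: nat
  have finA: "finite (Aidx n L)" by (simp add: Aidx_def)
  have Ymeas: "Y v \<in> borel_measurable (PiM S (\<lambda>_. ?B))" for v S
    unfolding Y_def using comp_meas_pmf[of _ S "bernoulli_pmf p"] by measurable
  have Ybound: "\<bar>Y v a\<bar> \<le> 1" for v a
  proof -
    have "0 \<le> (\<Prod>l\<in>{1..L}. g (a (v,l)))" "(\<Prod>l\<in>{1..L}. g (a (v,l))) \<le> 1"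
      using g0 g1 by (auto intro: prod_nonneg prod_le_1)
    moreover have "0 \<le> (\<Prod>l\<in>{1..L}. (if a (v,l) then 0 else 1::real))" "(\<Prod>l\<in>{1..L}. (if a (v,l) then 0 else 1::real)) \<le> 1"
      by (auto intro: prod_nonneg prod_le_1)
    ultimately show ?thesis unfolding Y_def by auto
  qed
  have Yint: "integrable ?M (Y v)" for v
    by (rule P.integrable_const_bound[where B=1]) (use Ybound Ymeas in auto)
  have ind0: "P.indep_vars (\<lambda>_. ?B) (\<lambda>i x. x i) (Aidx n L)"
    by (rule coord_indep) (rule measure_pmf.prob_space_axioms)
  have ind1: "P.indep_vars (\<lambda>j. PiM (K j) (\<lambda>_. ?B)) (\<lambda>j \<omega>. restrict (\<lambda>i. \<omega> i) (K j)) {1..n}"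
    by (rule P.indep_vars_restrict[OF ind0]) (auto simp: K_def Aidx_def disjoint_family_on_def)
  have ind2: "P.indep_vars (\<lambda>_. borel) (\<lambda>j \<omega>. Y j (restrict (\<lambda>i. \<omega> i) (K j))) {1..n}"
    by (rule P.indep_vars_compose2[OF ind1]) (rule Ymeas)
  have YK: "Y j (restrict (\<lambda>i. \<omega> i) (K j)) = Y j \<omega>" for j \<omega>
    unfolding Y_def K_def by (intro if_cong refl prod.cong arg_cong[where f="\<lambda>x. 1 - x"]) auto
  have ind: "P.indep_vars (\<lambda>_. borel) Y {1..n}"
    using ind2 by (simp add: YK)
  have "(\<integral>a. (\<Prod>v\<in>{1..n}. Y v a) \<partial>?M) = (\<Prod>v\<in>{1..n}. \<integral>a. Y v a \<partial>?M)"
    by (rule P.indep_vars_lebesgue_integral) (use ind Yint in auto)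
  also have "\<dots> = (\<integral>a. Y u a \<partial>?M) * (\<Prod>v\<in>{1..n} - {u}. \<integral>a. Y v a \<partial>?M)"
    using u by (subst prod.remove) auto
  also have "(\<integral>a. Y u a \<partial>?M) = (1-p)^L"
  proof -
    have "(\<integral>a. Y u a \<partial>?M) = (\<integral>a. (\<Prod>i\<in>{u}\<times>{1..L}. (\<lambda>x. if x then 0 else 1::real) (a i)) \<partial>?M)"
      unfolding Y_def by (simp add: prod_pair_singleton[symmetric])
    also have "\<dots> = (\<Prod>i\<in>{u}\<times>{1..L}. \<integral>x. (if x then 0 else 1::real) \<partial>?B)"
      by (rule prod_integral_sub) (use u in \<open>auto simp: Aidx_def intro: measure_pmf.prob_space_axioms integrable_measure_pmf_finite\<close>)
    also have "\<dots> = (1-p)^L" using p0 p1 by simp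
    finally show ?thesis .
  qed
  also have "(\<Prod>v\<in>{1..n} - {u}. \<integral>a. Y v a \<partial>?M) = (\<Prod>v\<in>{1..n} - {u}. 1 - (g True * p + g False * (1-p))^L)"
  proof (rule prod.cong[OF refl])
    fix v assume v: "v \<in> {1..n} - {u}"
    have bnd: "\<bar>\<Prod>l\<in>{1..L}. g (a (v,l))\<bar> \<le> 1" for a
      by (subst abs_of_nonneg) (use g0 g1 in \<open>auto intro!: prod_le_1 prod_nonneg\<close>)
    have int2: "integrable ?M (\<lambda>a. (\<Prod>l\<in>{1..L}. g (a (v,l))))"
      by (rule P.integrable_const_bound[where B=1])
         (use bnd comp_meas_pmf[of _ "Aidx n L" "bernoulli_pmf p"] in \<open>auto\<close>)
    have "(\<integral>a. Y v a \<partial>?M) = (\<integral>a. 1 - (\<Prod>l\<in>{1..L}. g (a (v,l))) \<partial>?M)"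
      using v unfolding Y_def by simp
    also have "\<dots> = 1 - (\<integral>a. (\<Prod>l\<in>{1..L}. g (a (v,l))) \<partial>?M)"
      using int2 by (subst Bochner_Integration.integral_diff) (auto simp: P.prob_space)
    also have "(\<integral>a. (\<Prod>l\<in>{1..L}. g (a (v,l))) \<partial>?M) = (\<integral>a. (\<Prod>i\<in>{v}\<times>{1..L}. g (a i)) \<partial>?M)"
      by (simp add: prod_pair_singleton[symmetric])
    also have "\<dots> = (\<Prod>i\<in>{v}\<times>{1..L}. \<integral>x. g x \<partial>?B)"
      by (rule prod_integral_sub) (use v in \<open>auto simp: Aidx_def intro: measure_pmf.prob_space_axioms integrable_measure_pmf_finite\<close>)
    also have "\<dots> = (g True * p + g False * (1-p))^L" using p0 p1 by simp
    finally show "(\<integral>a. Y v a \<partial>?M) = 1 - (g True * p + g False * (1-p))^L" .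
  qed
  also have "\<dots> = (1 - (g True * p + g False * (1-p))^L)^(n-1)"
    using u by simp
  finally show ?thesis unfolding Y_def .
qed



lemma Un_prob: "prob_space (uniform_measure lborel {0<..<1::real})"
  by (rule prob_space_uniform_measure) auto

lemma Un_int: "0 \<le> c \<Longrightarrow> c \<le> 1 \<Longrightarrow>
  (\<integral>x. (if c < x then 1 else 0::real) \<partial>uniform_measure lborel {0<..<1::real}) = 1 - c"
proof -
  assume c: "0 \<le> c" "c \<le> 1"
  have "(\<integral>x. (if c < x then 1 else 0::real) \<partial>uniform_measure lborel {0<..<1::real})
      = (\<integral>x. indicator {c<..} x \<partial>uniform_measure lborel {0<..<1::real})"
    by (intro Bochner_Integration.integral_cong) (auto simp: indicator_def)
  also have "\<dots> = measure (uniform_measure lborel {0<..<1::real}) {c<..}"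
    by simp
  also have "\<dots> = measure lborel ({0<..<1} \<inter> {c<..}) / measure lborel {0<..<1::real}"
    by (rule measure_uniform_measure) auto
  also have "{0<..<1} \<inter> {c<..} = {c<..<1}" using c by auto
  finally show ?thesis using c by simp
qed

lemma prod_01: "finite V \<Longrightarrow> (\<Prod>v\<in>V. (if P v then 1 else 0::real)) = (if (\<forall>v\<in>V. P v) then 1 else 0)"
  by (induction V rule: finite_induct) auto

lemma finite_Uidx: "finite (Uidx n)"
  by (rule finite_subset[of _ "{1..n} \<times> {1..n}"]) (auto simp: Uidx_def)

lemma U_block:
  fixes c :: "nat \<Rightarrow> real"
  assumes u: "u \<in> {1..n}" and c0: "\<And>v. 0 \<le> c v" and c1: "\<And>v. c v \<le> 1"
  shows "(\<integral>U. (if (\<forall>v\<in>{1..n}. v \<noteq> u \<longrightarrow> c v < U (min u v, max u v)) then 1 else 0::real)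
           \<partial>PiM (Uidx n) (\<lambda>_. uniform_measure lborel {0<..<1::real}))
         = (\<Prod>v\<in>{1..n}-{u}. 1 - c v)"
proof -
  let ?Un = "uniform_measure lborel {0<..<1::real}"
  define pr where "pr v = (min u v, max u v)" for v
  define oth where "oth i = (if fst i = u then snd i else fst i)" for i :: "nat \<times> nat"
  define V where "V = {1..n} - {u}"
  have othpr: "oth (pr v) = v" for v by (auto simp: oth_def pr_def min_def max_def)
  have inj: "inj_on pr V" by (rule inj_on_inverseI[where g=oth]) (rule othpr)
  have JU: "pr ` V \<subseteq> Uidx n" using u by (auto simp: pr_def V_def Uidx_def min_def max_def)
  have h_int: "integrable ?Un (\<lambda>x. if c (oth i) < x then 1 else 0::real)" for i
    by (rule finite_measure.integrable_const_bound[OF prob_space.finite_measure[OF Un_prob], where B=1]) auto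
  have "(\<lambda>U. (if (\<forall>v\<in>{1..n}. v \<noteq> u \<longrightarrow> c v < U (min u v, max u v)) then 1 else 0::real))
      = (\<lambda>U. \<Prod>v\<in>V. (if c v < U (pr v) then 1 else 0::real))"
    by (auto simp: prod_01 V_def pr_def)
  also have "\<dots> = (\<lambda>U. \<Prod>i\<in>pr ` V. (\<lambda>x. if c (oth i) < x then 1 else 0::real) (U i))"
    by (auto simp: prod.reindex[OF inj] othpr)
  finally have "(\<integral>U. (if (\<forall>v\<in>{1..n}. v \<noteq> u \<longrightarrow> c v < U (min u v, max u v)) then 1 else 0::real) \<partial>PiM (Uidx n) (\<lambda>_. ?Un))
       = (\<Prod>i\<in>pr ` V. \<integral>x. (if c (oth i) < x then 1 else 0::real) \<partial>?Un)"
    by (simp only:) (rule prod_integral_sub[OF Un_prob finite_Uidx JU h_int])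
  also have "\<dots> = (\<Prod>i\<in>pr ` V. 1 - c (oth i))"
    using c0 c1 by (simp add: Un_int)
  also have "\<dots> = (\<Prod>v\<in>V. 1 - c v)"
    by (simp add: prod.reindex[OF inj] othpr)
  finally show ?thesis unfolding V_def .
qed



lemma q_split: "q x y = (if x then (if y then q True True else q True False) else (if y then q False True else q False False))"
  by (cases x; cases y) auto

lemma meas_ind:
  fixes q :: "bool \<Rightarrow> bool \<Rightarrow> real"
  shows "(\<lambda>\<omega>. if (\<forall>v\<in>{1..n}. \<not> MAG_edge q L \<omega> u v) \<and> S_L L (fst \<omega>) u = 0 then 1 else 0::real)
     \<in> borel_measurable (PiM (Aidx n L) (\<lambda>_. measure_pmf (bernoulli_pmf p)) \<Otimes>\<^sub>M PiM (Uidx n) (\<lambda>_. uniform_measure lborel {0<..<1::real}))"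
proof -
  let ?MA = "PiM (Aidx n L) (\<lambda>_. measure_pmf (bernoulli_pmf p))"
  let ?MU = "PiM (Uidx n) (\<lambda>_. uniform_measure lborel {0<..<1::real})"
  have fA[measurable]: "(\<lambda>\<omega>. fst \<omega> i) \<in> measurable (?MA \<Otimes>\<^sub>M ?MU) (count_space UNIV)" for i :: "nat \<times> nat"
    by (rule measurable_compose[OF measurable_fst comp_meas_pmf[of i "Aidx n L" "bernoulli_pmf p"]])
  have fU[measurable]: "(\<lambda>\<omega>. snd \<omega> i) \<in> borel_measurable (?MA \<Otimes>\<^sub>M ?MU)" for i :: "nat \<times> nat"
    using measurable_compose[OF measurable_snd comp_meas_unif[of i "Uidx n" "{0<..<1::real}"], of ?MA] by simp
  have S: "S_L L (fst \<omega>) u = 0 \<longleftrightarrow> (\<forall>l\<in>{1..L}. \<not> fst \<omega> (u, l))" for \<omega>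
    by (auto simp: S_L_def)
  show ?thesis
    unfolding MAG_edge_def QL_def S
    by (subst q_split) measurable
qed



lemma card_filter_sum: "finite A \<Longrightarrow> real (card {u\<in>A. P u}) = (\<Sum>u\<in>A. if P u then 1 else 0)"
  by (simp add: sum.inter_filter[symmetric])

lemma expected_formula:
  fixes mu :: "bool \<Rightarrow> real" and q :: "bool \<Rightarrow> bool \<Rightarrow> real"
  assumes mu_pos: "\<And>b. 0 < mu b" and mu_lt1: "\<And>b. mu b < 1"
    and mu_sum: "mu False + mu True = 1"
    and q_pos: "\<And>a b. 0 < q a b" and q_lt1: "\<And>a b. q a b < 1"
  shows "expected_I mu q 0 n L = real n * mu False ^ L * (1 - Gamma_MAG mu q False ^ L) ^ (n - 1)"
proof -
  let ?MA = "PiM (Aidx n L) (\<lambda>_. measure_pmf (bernoulli_pmf (mu True)))"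
  let ?MU = "PiM (Uidx n) (\<lambda>_. uniform_measure lborel {0<..<1::real})"
  let ?M = "?MA \<Otimes>\<^sub>M ?MU"
  interpret MA: prob_space ?MA by (rule prob_space_PiM) (rule measure_pmf.prob_space_axioms)
  interpret MU: prob_space ?MU by (rule prob_space_PiM) (rule Un_prob)
  interpret PP: pair_prob_space ?MA ?MU ..
  define ind where "ind u \<omega> = (if (\<forall>v\<in>{1..n}. \<not> MAG_edge q L \<omega> u v) \<and> S_L L (fst \<omega>) u = 0 then 1 else 0::real)" for u \<omega>
  have p0: "0 \<le> mu True" and p1: "mu True \<le> 1" using mu_pos[of True] mu_lt1[of True] by auto
  have ind_meas: "ind u \<in> borel_measurable ?M" for u
  proof -
    have "ind u = (\<lambda>\<omega>. if (\<forall>v\<in>{1..n}. \<not> MAG_edge q L \<omega> u v) \<and> S_L L (fst \<omega>) u = 0 then 1 else 0::real)"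
      by (simp add: fun_eq_iff ind_def)
    then show ?thesis using meas_ind[of n q L u "mu True"] by simp
  qed
  have ind_int: "integrable ?M (ind u)" for u
    by (rule PP.integrable_const_bound[where B=1]) (auto simp: ind_def intro: ind_meas)
  have QL01: "0 \<le> QL q L a u v" "QL q L a u v \<le> 1" for a u v
  proof -
    have a: "0 \<le> q x y" "q x y \<le> 1" for x y using q_pos[of x y] q_lt1[of x y] by auto
    show "0 \<le> QL q L a u v" "QL q L a u v \<le> 1"
      unfolding QL_def using a by (auto intro!: prod_nonneg prod_le_1)
  qed
  have inner: "(\<integral>U. ind u (a, U) \<partial>?MU) = (if S_L L a u = 0 then (\<Prod>v\<in>{1..n}-{u}. 1 - QL q L a u v) else 0)"
    if u: "u \<in> {1..n}" for u a
  proof -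
    have "(\<lambda>U. ind u (a, U)) = (\<lambda>U. (if S_L L a u = 0 then 1 else 0) *
        (if (\<forall>v\<in>{1..n}. v \<noteq> u \<longrightarrow> QL q L a u v < U (min u v, max u v)) then 1 else 0::real))"
      by (rule ext) (auto simp: ind_def MAG_edge_def not_le)
    then have "(\<integral>U. ind u (a, U) \<partial>?MU) = (if S_L L a u = 0 then 1 else 0) *
        (\<integral>U. (if (\<forall>v\<in>{1..n}. v \<noteq> u \<longrightarrow> QL q L a u v < U (min u v, max u v)) then 1 else 0::real) \<partial>?MU)"
      by simp
    also have "\<dots> = (if S_L L a u = 0 then 1 else 0) * (\<Prod>v\<in>{1..n}-{u}. 1 - QL q L a u v)"
      by (subst U_block[OF u]) (use QL01 in auto)
    finally show ?thesis by simp
  qed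
  have outer: "(\<integral>a. (if S_L L a u = 0 then (\<Prod>v\<in>{1..n}-{u}. 1 - QL q L a u v) else 0) \<partial>?MA)
      = mu False ^ L * (1 - Gamma_MAG mu q False ^ L) ^ (n - 1)" if u: "u \<in> {1..n}" for u
  proof -
    have eq: "(if S_L L a u = 0 then (\<Prod>v\<in>{1..n}-{u}. 1 - QL q L a u v) else 0) =
       (\<Prod>v\<in>{1..n}. (if v = u then (\<Prod>l\<in>{1..L}. (if a (v,l) then 0 else 1))
            else 1 - (\<Prod>l\<in>{1..L}. q False (a (v,l)))))" for a
    proof (cases "S_L L a u = 0")
      case True
      then have F: "\<not> a (u, l)" if "l \<in> {1..L}" for l
        using that by (auto simp: S_L_def)
      have "(\<Prod>v\<in>{1..n}. (if v = u then (\<Prod>l\<in>{1..L}. (if a (v,l) then 0 else 1))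
            else 1 - (\<Prod>l\<in>{1..L}. q False (a (v,l))))) =
            (\<Prod>l\<in>{1..L}. (if a (u,l) then 0 else 1)) * (\<Prod>v\<in>{1..n}-{u}. (if v = u then (\<Prod>l\<in>{1..L}. (if a (v,l) then 0 else 1))
            else 1 - (\<Prod>l\<in>{1..L}. q False (a (v,l)))))"
        using u by (subst prod.remove[of _ u]) auto
      also have "(\<Prod>l\<in>{1..L}. (if a (u,l) then 0 else 1::real)) = 1"
        using F by (auto intro: prod.neutral)
      also have "(\<Prod>v\<in>{1..n}-{u}. (if v = u then (\<Prod>l\<in>{1..L}. (if a (v,l) then 0 else 1))
            else 1 - (\<Prod>l\<in>{1..L}. q False (a (v,l))))) = (\<Prod>v\<in>{1..n}-{u}. 1 - QL q L a u v)"
        unfolding QL_def using F by (intro prod.cong refl) auto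
      finally show ?thesis using True by simp
    next
      case False
      then obtain l where l: "l \<in> {1..L}" "a (u, l)"
        by (auto simp: S_L_def)
      have "(\<Prod>l\<in>{1..L}. (if a (u,l) then 0 else 1::real)) = 0"
        using l by (intro prod_zero) auto
      then have "(\<Prod>v\<in>{1..n}. (if v = u then (\<Prod>l\<in>{1..L}. (if a (v,l) then 0 else 1))
            else 1 - (\<Prod>l\<in>{1..L}. q False (a (v,l))))) = 0"
        using u by (intro prod_zero) auto
      then show ?thesis using False by simp
    qed
    show ?thesis
      unfolding eq
    proof (subst A_block[OF p0 p1 u])
      show "0 \<le> q False x" "q False x \<le> 1" for x using q_pos[of False x] q_lt1[of False x] by auto
      have mF: "mu False = 1 - mu True" using mu_sum by simp
      show "(1 - mu True) ^ L * (1 - (q False True * mu True + q False False * (1 - mu True)) ^ L) ^ (n - 1) =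
        mu False ^ L * (1 - Gamma_MAG mu q False ^ L) ^ (n - 1)"
        unfolding Gamma_MAG_def mF by (simp add: algebra_simps)
    qed
  qed
  have "expected_I mu q 0 n L = (\<integral>\<omega>. (\<Sum>u\<in>{1..n}. ind u \<omega>) \<partial>?M)"
    unfolding expected_I_def MAG_space_def I_count_def ind_def
    by (intro Bochner_Integration.integral_cong refl) (rule card_filter_sum, simp)
  also have "\<dots> = (\<Sum>u\<in>{1..n}. \<integral>\<omega>. ind u \<omega> \<partial>?M)"
    by (rule Bochner_Integration.integral_sum) (rule ind_int)
  also have "\<dots> = (\<Sum>u\<in>{1..n}. mu False ^ L * (1 - Gamma_MAG mu q False ^ L) ^ (n - 1))"
  proof (rule sum.cong[OF refl])
    fix u assume u: "u \<in> {1..n}"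
    have "(\<integral>\<omega>. ind u \<omega> \<partial>?M) = (\<integral>a. (\<integral>U. ind u (a, U) \<partial>?MU) \<partial>?MA)"
      by (rule PP.integral_fst'[symmetric]) (rule ind_int)
    also have "\<dots> = (\<integral>a. (if S_L L a u = 0 then (\<Prod>v\<in>{1..n}-{u}. 1 - QL q L a u v) else 0) \<partial>?MA)"
      by (simp add: inner[OF u])
    also have "\<dots> = mu False ^ L * (1 - Gamma_MAG mu q False ^ L) ^ (n - 1)"
      by (rule outer[OF u])
    finally show "(\<integral>\<omega>. ind u \<omega> \<partial>?M) = mu False ^ L * (1 - Gamma_MAG mu q False ^ L) ^ (n - 1)" .
  qed
  also have "\<dots> = real n * mu False ^ L * (1 - Gamma_MAG mu q False ^ L) ^ (n - 1)"
    by simp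
  finally show ?thesis .
qed



lemma asym_main:
  fixes m g \<rho> :: real and L :: "nat \<Rightarrow> nat"
  assumes m0: "0 < m" and m1: "m < 1" and g0: "0 < g" and g1: "g < 1" and rho: "0 < \<rho>"
    and mpos: "1 + \<rho> * ln m > 0" and adm: "admissible \<rho> L"
  shows "(1 + \<rho> * ln g < 0 \<longrightarrow>
           filterlim (\<lambda>n. real n * m ^ L n * (1 - g ^ L n) ^ (n - 1)) at_top sequentially) \<and>
         (1 + \<rho> * ln g > 0 \<longrightarrow>
           (\<lambda>n. real n * m ^ L n * (1 - g ^ L n) ^ (n - 1)) \<longlonglongrightarrow> 0)"
proof -
  define r where "r n = real (L n) / (\<rho> * ln (real n))" for n
  have ev2: "eventually (\<lambda>n::nat. n \<ge> 2) sequentially" by (rule eventually_ge_at_top)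
  have r1: "r \<longlonglongrightarrow> 1"
  proof -
    have "eventually (\<lambda>n::nat. real (L n) \<noteq> 0 \<or> \<rho> * ln (real n) \<noteq> 0) at_top"
      using ev2 by eventually_elim (use rho in auto)
    then show ?thesis
      unfolding r_def using asymp_equivD_strong[of "\<lambda>n. real (L n)" at_top "\<lambda>n. \<rho> * ln (real n)"] adm
      by (simp add: admissible_def)
  qed
  have lnn: "filterlim (\<lambda>n::nat. ln (real n)) at_top sequentially" by real_asymp
  have key: "real n * x ^ L n = exp ((1 + r n * \<rho> * ln x) * ln (real n))" if "0 < x" "n \<ge> 2" for x n
  proof -
    have ln0: "ln (real n) > 0" using that by simp
    have "(1 + r n * \<rho> * ln x) * ln (real n) = ln (real n) + real (L n) * ln x"
      unfolding r_def using ln0 rho by (simp add: field_simps)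
    then have "exp ((1 + r n * \<rho> * ln x) * ln (real n)) = exp (ln (real n)) * exp (real (L n) * ln x)"
      by (simp add: exp_add)
    also have "\<dots> = real n * x ^ L n"
      using that by (simp add: exp_of_nat_mult)
    finally show ?thesis by simp
  qed
  have coef: "(\<lambda>n. 1 + r n * \<rho> * ln x) \<longlonglongrightarrow> 1 + \<rho> * ln x" for x
    by (auto intro!: tendsto_eq_intros r1)
  have top: "filterlim (\<lambda>n. real n * x ^ L n) at_top sequentially" if "0 < x" "1 + \<rho> * ln x > 0" for x
  proof -
    have "filterlim (\<lambda>n. (1 + r n * \<rho> * ln x) * ln (real n)) at_top sequentially"
      by (rule filterlim_tendsto_pos_mult_at_top[OF coef that(2) lnn])
    then have "filterlim (\<lambda>n. exp ((1 + r n * \<rho> * ln x) * ln (real n))) at_top sequentially"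
      by (rule filterlim_compose[OF exp_at_top])
    then show ?thesis
    proof (rule filterlim_cong[THEN iffD1, rotated 3])
      show "\<forall>\<^sub>F n in sequentially. exp ((1 + r n * \<rho> * ln x) * ln (real n)) = real n * x ^ L n"
        using ev2 by eventually_elim (simp add: key[OF that(1)])
    qed auto
  qed
  have bot: "(\<lambda>n. real n * x ^ L n) \<longlonglongrightarrow> 0" if "0 < x" "1 + \<rho> * ln x < 0" for x
  proof -
    have "filterlim (\<lambda>n. (1 + r n * \<rho> * ln x) * ln (real n)) at_bot sequentially"
      by (rule filterlim_tendsto_neg_mult_at_bot[OF coef that(2) lnn])
    then have "(\<lambda>n. exp ((1 + r n * \<rho> * ln x) * ln (real n))) \<longlonglongrightarrow> 0"
      by (rule filterlim_compose[OF exp_at_bot])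
    then show ?thesis
    proof (rule Lim_transform_eventually)
      show "\<forall>\<^sub>F n in sequentially. exp ((1 + r n * \<rho> * ln x) * ln (real n)) = real n * x ^ L n"
        using ev2 by eventually_elim (simp add: key[OF that(1)])
    qed
  qed
  show ?thesis
  proof safe
    assume neg: "1 + \<rho> * ln g < 0"
    have "eventually (\<lambda>n. real n * g ^ L n < 1/2) sequentially"
      using order_tendstoD(2)[OF bot[OF g0 neg], of "1/2"] by simp
    then have ev: "eventually (\<lambda>n. 1/2 * (real n * m ^ L n) \<le> real n * m ^ L n * (1 - g ^ L n) ^ (n - 1)) sequentially"
    proof eventually_elim
      case (elim n)
      have gL: "0 \<le> g ^ L n" "g ^ L n \<le> 1" using g0 g1 by (auto intro: power_le_one)
      have "1 + real (n - 1) * (- (g ^ L n)) \<le> (1 + - (g ^ L n)) ^ (n - 1)"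
        by (rule Bernoulli_inequality) (use gL in auto)
      moreover have "real (n - 1) * g ^ L n \<le> real n * g ^ L n"
        using gL by (intro mult_right_mono) auto
      ultimately have "1/2 \<le> (1 - g ^ L n) ^ (n - 1)" using elim by simp
      moreover have "0 \<le> real n * m ^ L n" using m0 by simp
      ultimately have "(real n * m ^ L n) * (1/2) \<le> (real n * m ^ L n) * (1 - g ^ L n) ^ (n - 1)"
        by (rule mult_left_mono)
      then show ?case by linarith
    qed
    have "filterlim (\<lambda>n. 1/2 * (real n * m ^ L n)) at_top sequentially"
      by (rule filterlim_tendsto_pos_mult_at_top[OF tendsto_const _ top[OF m0 mpos]]) simp
    then show "filterlim (\<lambda>n. real n * m ^ L n * (1 - g ^ L n) ^ (n - 1)) at_top sequentially"
      by (rule filterlim_at_top_mono) (rule ev)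
  next
    assume pos: "1 + \<rho> * ln g > 0"
    define c where "c = (1 + \<rho> * ln g) / 2"
    have c0: "c > 0" using pos by (simp add: c_def)
    have "eventually (\<lambda>n. 1 + r n * \<rho> * ln g > c) sequentially"
      by (rule order_tendstoD(1)[OF coef]) (use pos in \<open>simp add: c_def\<close>)
    then have ev: "eventually (\<lambda>n. real n * m ^ L n * (1 - g ^ L n) ^ (n - 1) \<le>
        real n * exp (- (real n - 1) * (real n powr c / real n))) sequentially"
      using ev2
    proof eventually_elim
      case (elim n)
      have gL: "0 \<le> g ^ L n" "g ^ L n \<le> 1" using g0 g1 by (auto intro: power_le_one)
      have ln0: "ln (real n) > 0" using elim by simp
      have "real n powr c = exp (c * ln (real n))" using elim by (simp add: powr_def)
      also have "\<dots> \<le> exp ((1 + r n * \<rho> * ln g) * ln (real n))"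
        using elim ln0 by (intro exp_mono mult_right_mono) auto
      also have "\<dots> = real n * g ^ L n" using key[OF g0 elim(2)] by simp
      finally have A: "real n powr c / real n \<le> g ^ L n"
        using elim by (simp add: divide_le_eq mult.commute)
      have "(1 - g ^ L n) ^ (n - 1) \<le> exp (- (g ^ L n)) ^ (n - 1)"
        by (rule power_mono) (use gL exp_ge_add_one_self[of "- (g ^ L n)"] in auto)
      also have "\<dots> = exp (- (real (n - 1) * g ^ L n))"
        by (simp add: exp_of_nat_mult[symmetric])
      also have "\<dots> \<le> exp (- (real n - 1) * (real n powr c / real n))"
      proof -
        have h: "(real n - 1) * (real n powr c / real n) \<le> (real n - 1) * g ^ L n"
          using A elim by (intro mult_left_mono) auto
        have e: "real (n - 1) = real n - 1" using elim by (simp add: of_nat_diff)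
        show ?thesis unfolding exp_le_cancel_iff e minus_mult_left[symmetric] neg_le_iff_le by (rule h)
      qed
      finally have B: "(1 - g ^ L n) ^ (n - 1) \<le> exp (- (real n - 1) * (real n powr c / real n))" .
      have "m ^ L n \<le> 1" using m0 m1 by (auto intro: power_le_one)
      then have "real n * m ^ L n * (1 - g ^ L n) ^ (n - 1) \<le> real n * 1 * exp (- (real n - 1) * (real n powr c / real n))"
        using B m0 gL by (intro mult_mono) auto
      then show ?case by simp
    qed
    have lim: "(\<lambda>n::nat. real n * exp (- (real n - 1) * (real n powr c / real n))) \<longlonglongrightarrow> 0"
      using c0 by real_asymp
    have ev0: "eventually (\<lambda>n. 0 \<le> real n * m ^ L n * (1 - g ^ L n) ^ (n - 1)) sequentially"
      using g0 g1 m0 by (auto intro!: always_eventually mult_nonneg_nonneg zero_le_power power_le_one)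
    show "(\<lambda>n. real n * m ^ L n * (1 - g ^ L n) ^ (n - 1)) \<longlonglongrightarrow> 0"
      by (rule tendsto_sandwich[OF ev0 ev tendsto_const lim])
  qed
qed


theorem proposition2:
  fixes mu :: "bool \<Rightarrow> real" and q :: "bool \<Rightarrow> bool \<Rightarrow> real" and \<rho> :: real
  assumes mu_pos: "\<And>b. 0 < mu b" and mu_lt1: "\<And>b. mu b < 1"
    and mu_sum: "mu False + mu True = 1"
    and q_sym: "q True False = q False True"
    and q_pos: "\<And>a b. 0 < q a b" and q_lt1: "\<And>a b. q a b < 1"
    and rho_pos: "0 < \<rho>"
    and Gamma_lt: "Gamma_MAG mu q False < Gamma_MAG mu q True"
    and mu0: "1 + \<rho> * ln (mu False) > 0"
  shows "\<forall>L. admissible \<rho> L \<longrightarrow>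
     ((1 + \<rho> * ln (Gamma_MAG mu q False) < 0 \<longrightarrow>
         filterlim (\<lambda>n. expected_I mu q 0 n (L n)) at_top sequentially) \<and>
      (1 + \<rho> * ln (Gamma_MAG mu q False) > 0 \<longrightarrow>
         (\<lambda>n. expected_I mu q 0 n (L n)) \<longlonglongrightarrow> 0))"
proof (intro allI impI)
  fix L :: "nat \<Rightarrow> nat"
  assume adm: "admissible \<rho> L"
  have E: "(\<lambda>n. expected_I mu q 0 n (L n)) =
      (\<lambda>n. real n * mu False ^ L n * (1 - Gamma_MAG mu q False ^ L n) ^ (n - 1))"
    by (rule ext) (rule expected_formula[OF mu_pos mu_lt1 mu_sum q_pos q_lt1])
  have g0: "0 < Gamma_MAG mu q False"
    unfolding Gamma_MAG_def using mu_pos q_pos by (simp add: add_pos_pos)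
  have "Gamma_MAG mu q False < mu False * 1 + mu True * 1"
    unfolding Gamma_MAG_def using mu_pos q_lt1
    by (intro add_strict_mono mult_strict_left_mono) auto
  then have g1: "Gamma_MAG mu q False < 1" using mu_sum by simp
  show "(1 + \<rho> * ln (Gamma_MAG mu q False) < 0 \<longrightarrow>
         filterlim (\<lambda>n. expected_I mu q 0 n (L n)) at_top sequentially) \<and>
      (1 + \<rho> * ln (Gamma_MAG mu q False) > 0 \<longrightarrow>
         (\<lambda>n. expected_I mu q 0 n (L n)) \<longlonglongrightarrow> 0)"
    unfolding E by (rule asym_main[OF mu_pos mu_lt1 g0 g1 rho_pos mu0 adm])
qed

end
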